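(* Let $\lambda$ be a partition of $n$ and $t$ a tableau of shape $\lambda$. Then $\phi(\mathbf{e}_t)=\sum_{\pi\in C_t}\mathrm{sgn}(\pi)\,\pi^{-1}\circ\phi(\{t\})$.
   Context: For $\pi\in\mathrm{Sym}_n$ and a tableau $t$ of shape $\lambda$ (filling of the Young diagram with $1,\ldots,n$), $\pi(t)$ replaces each entry $x$ by $\pi(x)$. The $\lambda$-tabloid $\{t\}$ is the set of all tableaux obtained from $t$ by permuting entries within rows. $C_t$ is the column-stabilizer of $t$ (permutations preserving each column's set of entries). The polytabloid is $\mathbf{e}_t=\sum_{\sigma\in C_t}\mathrm{sgn}(\sigma)\{\sigma(t)\}\in M^\lambda$, where $M^\lambda$ is the complex vector space with basis the $\lambda$-tabloids. $id_\lambda$ is the standard tableau whose rows consist of consecutive numbers, $\tau_t$ is the unique permutation with $\tau_t(t)=id_\lambda$, and $\phi:M^\lambda\to\mathbb{C}[\mathrm{Sym}_n]$ is the linear map with $\phi(\{t\})=\sum_{t'\in\{t\}}\tau_{t'}$. Permutations are composed so that $(\alpha\circ\beta)(x)=\beta(\alpha(x))$, and $\sigma\circ\sum a_\pi\pi=\sum a_\pi(\sigma\circ\pi)$. *)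

theory Defs
  imports "HOL-Combinatorics.Permutations" Complex_Main
begin

definition is_partition :: "nat \<Rightarrow> nat list \<Rightarrow> bool" where
  "is_partition n lam \<longleftrightarrow> sorted_wrt (\<ge>) lam \<and> (\<forall>k\<in>set lam. 0 < k) \<and> sum_list lam = n"

definition cells :: "nat list \<Rightarrow> (nat \<times> nat) set" where
  "cells lam = {(i, j). i < length lam \<and> j < lam ! i}"

definition row :: "nat list \<Rightarrow> nat \<Rightarrow> (nat \<times> nat) set" where
  "row lam i = {c \<in> cells lam. fst c = i}"

definition col :: "nat list \<Rightarrow> nat \<Rightarrow> (nat \<times> nat) set" where
  "col lam j = {c \<in> cells lam. snd c = j}"

definition Sym :: "nat \<Rightarrow> (nat \<Rightarrow> nat) set" where
  "Sym n = {p. p permutes {1..n}}"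

definition tableau :: "nat list \<Rightarrow> (nat \<times> nat \<Rightarrow> nat) \<Rightarrow> bool" where
  "tableau lam t \<longleftrightarrow> bij_betw t (cells lam) {1..sum_list lam} \<and> (\<forall>c. c \<notin> cells lam \<longrightarrow> t c = 0)"

(* pi(t) replaces each entry x by pi x: this is  pi \<circ> t  *)

definition tabloid :: "nat list \<Rightarrow> (nat \<times> nat \<Rightarrow> nat) \<Rightarrow> (nat \<times> nat \<Rightarrow> nat) set" where
  "tabloid lam t = {t'. tableau lam t' \<and> (\<forall>i. t' ` row lam i = t ` row lam i)}"

definition tabloids :: "nat list \<Rightarrow> (nat \<times> nat \<Rightarrow> nat) set set" where
  "tabloids lam = {tabloid lam t | t. tableau lam t}"

definition colstab :: "nat list \<Rightarrow> (nat \<times> nat \<Rightarrow> nat) \<Rightarrow> (nat \<Rightarrow> nat) set" where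
  "colstab lam t = {s \<in> Sym (sum_list lam). \<forall>j. s ` (t ` col lam j) = t ` col lam j}"

(* M^lambda: complex-valued coefficient functions on tabloids; basis vector of a tabloid *)
definition basisM :: "(nat \<times> nat \<Rightarrow> nat) set \<Rightarrow> ((nat \<times> nat \<Rightarrow> nat) set \<Rightarrow> complex)" where
  "basisM T = (\<lambda>T'. if T' = T then 1 else 0)"

definition polytabloid :: "nat list \<Rightarrow> (nat \<times> nat \<Rightarrow> nat) \<Rightarrow> ((nat \<times> nat \<Rightarrow> nat) set \<Rightarrow> complex)" where
  "polytabloid lam t = (\<lambda>T. \<Sum>s\<in>colstab lam t. of_int (sign s) * basisM (tabloid lam (s \<circ> t)) T)"

definition id_tab :: "nat list \<Rightarrow> (nat \<times> nat \<Rightarrow> nat)" where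
  "id_tab lam = (\<lambda>(i, j). if (i, j) \<in> cells lam then sum_list (take i lam) + j + 1 else 0)"

definition tau :: "nat list \<Rightarrow> (nat \<times> nat \<Rightarrow> nat) \<Rightarrow> (nat \<Rightarrow> nat)" where
  "tau lam t = (THE p. p \<in> Sym (sum_list lam) \<and> p \<circ> t = id_tab lam)"

(* group algebra C[Sym_n]: complex-valued coefficient functions on permutations *)
definition delta :: "(nat \<Rightarrow> nat) \<Rightarrow> ((nat \<Rightarrow> nat) \<Rightarrow> complex)" where
  "delta p = (\<lambda>q. if q = p then 1 else 0)"

(* paper's composition: (alpha o beta)(x) = beta(alpha x), i.e. Isabelle's  beta \<circ> alpha.
   sigma o (sum a_pi pi) = sum a_pi (sigma o pi) *)
definition lmult :: "nat \<Rightarrow> (nat \<Rightarrow> nat) \<Rightarrow> ((nat \<Rightarrow> nat) \<Rightarrow> complex) \<Rightarrow> ((nat \<Rightarrow> nat) \<Rightarrow> complex)" where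
  "lmult n s a = (\<lambda>q. \<Sum>p\<in>Sym n. a p * delta (p \<circ> s) q)"

definition phi :: "nat list \<Rightarrow> ((nat \<times> nat \<Rightarrow> nat) set \<Rightarrow> complex) \<Rightarrow> ((nat \<Rightarrow> nat) \<Rightarrow> complex)" where
  "phi lam v = (\<lambda>q. \<Sum>T\<in>tabloids lam. v T * (\<Sum>t'\<in>T. delta (tau lam t') q))"

end

theory Submission
  imports Defs
begin

lemma sum_take_mono: "i \<le> k \<Longrightarrow> sum_list (take i (xs::nat list)) \<le> sum_list (take k xs)"
proof -
  assume "i \<le> k"
  then have "take k xs = take i xs @ take (k - i) (drop i xs)"
    by (metis le_add_diff_inverse take_add)
  then show ?thesis by simp
qed

lemma sum_take_Suc: "i < length xs \<Longrightarrow> sum_list (take (Suc i) (xs::nat list)) = sum_list (take i xs) + xs ! i"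
  by (simp add: take_Suc_conv_app_nth)

lemma cells_finite: "tableau lam t \<Longrightarrow> finite (cells lam)"
  unfolding tableau_def using bij_betw_finite by blast

lemma id_tab_inj: "inj_on (id_tab lam) (cells lam)"
proof (rule inj_onI)
  fix a b assume a: "a \<in> cells lam" and b: "b \<in> cells lam" and e: "id_tab lam a = id_tab lam b"
  obtain i j where ij: "a = (i,j)" by force
  obtain i' j' where ij': "b = (i',j')" by force
  have ai: "i < length lam" "j < lam ! i" using a ij by (auto simp: cells_def)
  have bi: "i' < length lam" "j' < lam ! i'" using b ij' by (auto simp: cells_def)
  have e2: "sum_list (take i lam) + j = sum_list (take i' lam) + j'"
    using e a b ij ij' by (simp add: id_tab_def)
  have "i = i'"
  proof (rule ccontr)
    assume "i \<noteq> i'"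
    then consider "i < i'" | "i' < i" by linarith
    then show False
    proof cases
      case 1
      have "sum_list (take (Suc i) lam) \<le> sum_list (take i' lam)" using 1 sum_take_mono by simp
      then show False using e2 ai sum_take_Suc[of i lam] by linarith
    next
      case 2
      have "sum_list (take (Suc i') lam) \<le> sum_list (take i lam)" using 2 sum_take_mono by simp
      then show False using e2 bi sum_take_Suc[of i' lam] by linarith
    qed
  qed
  then show "a = b" using e2 ij ij' by simp
qed

lemma id_tab_range: "c \<in> cells lam \<Longrightarrow> id_tab lam c \<in> {1..sum_list lam}"
proof -
  assume c: "c \<in> cells lam"
  obtain i j where ij: "c = (i,j)" by force
  have ai: "i < length lam" "j < lam ! i" using c ij by (auto simp: cells_def)
  have "sum_list (take (Suc i) lam) \<le> sum_list (take (length lam) lam)"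
    using ai sum_take_mono[of "Suc i" "length lam" lam] by simp
  then show ?thesis using c ij ai sum_take_Suc[of i lam] by (simp add: id_tab_def)
qed

lemma id_tab_bij: "tableau lam t \<Longrightarrow> bij_betw (id_tab lam) (cells lam) {1..sum_list lam}"
proof -
  assume t: "tableau lam t"
  have card: "card (cells lam) = card {1..sum_list lam}"
    using t unfolding tableau_def using bij_betw_same_card by blast
  have "id_tab lam ` cells lam = {1..sum_list lam}"
  proof (rule card_subset_eq)
    show "id_tab lam ` cells lam \<subseteq> {1..sum_list lam}" using id_tab_range by blast
    show "card (id_tab lam ` cells lam) = card {1..sum_list lam}"
      using card card_image[OF id_tab_inj] by simp
  qed simp
  then show ?thesis using id_tab_inj by (simp add: bij_betw_def)
qed

lemma id_tab_out: "c \<notin> cells lam \<Longrightarrow> id_tab lam c = 0"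
  by (cases c) (simp add: id_tab_def)

lemma tau_unique:
  assumes "tableau lam t'" "p \<in> Sym (sum_list lam)" "p' \<in> Sym (sum_list lam)" "p \<circ> t' = p' \<circ> t'"
  shows "p = p'"
proof
  fix x
  show "p x = p' x"
  proof (cases "x \<in> {1..sum_list lam}")
    case True
    then obtain c where "c \<in> cells lam" "x = t' c" using assms(1) unfolding tableau_def bij_betw_def using imageE by metis
    then show ?thesis using assms(4) by (metis comp_apply)
  next
    case False
    then show ?thesis using assms(2,3) unfolding Sym_def by (simp add: permutes_not_in)
  qed
qed

lemma tau_char:
  assumes t': "tableau lam t'"
  shows "tau lam t' \<in> Sym (sum_list lam) \<and> tau lam t' \<circ> t' = id_tab lam"
proof -
  let ?N = "sum_list lam"
  define p where "p = (\<lambda>x. if x \<in> {1..?N} then id_tab lam (inv_into (cells lam) t' x) else x)"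
  have bt: "bij_betw t' (cells lam) {1..?N}" using t' by (simp add: tableau_def)
  have bi: "bij_betw (inv_into (cells lam) t') {1..?N} (cells lam)" using bt by (rule bij_betw_inv_into)
  have "bij_betw (id_tab lam \<circ> inv_into (cells lam) t') {1..?N} {1..?N}"
    using bij_betw_trans[OF bi id_tab_bij[OF t']] .
  then have "bij_betw p {1..?N} {1..?N}"
    by (rule bij_betw_cong[THEN iffD1, rotated]) (simp add: p_def)
  then have pS: "p \<in> Sym ?N" unfolding Sym_def by (auto intro!: bij_imp_permutes simp: p_def)
  have pt: "p \<circ> t' = id_tab lam"
  proof
    fix c
    show "(p \<circ> t') c = id_tab lam c"
    proof (cases "c \<in> cells lam")
      case True
      then have "t' c \<in> {1..?N}" using bt bij_betwE by blast
      then show ?thesis using True bt by (simp add: p_def bij_betw_inv_into_left)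
    next
      case False
      obtain a b where ab: "c = (a,b)" by (cases c)
      have "t' c = 0" using t' False unfolding tableau_def ab by simp
      then show ?thesis using False by (simp add: p_def id_tab_out)
    qed
  qed
  have "tau lam t' = p" unfolding tau_def
  proof (rule the_equality)
    show "p \<in> Sym ?N \<and> p \<circ> t' = id_tab lam" using pS pt by simp
    fix q assume q: "q \<in> Sym ?N \<and> q \<circ> t' = id_tab lam"
    then show "q = p" using tau_unique[OF t', of q p] pS pt by simp
  qed
  then show ?thesis using pS pt by simp
qed


lemma tableau_out: "tableau lam t \<Longrightarrow> c \<notin> cells lam \<Longrightarrow> t c = 0"
proof -
  assume t: "tableau lam t" and c: "c \<notin> cells lam"
  obtain a b where ab: "c = (a,b)" by (cases c)
  show ?thesis using t c unfolding tableau_def ab by simp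
qed

lemma tableau_comp:
  assumes s: "s \<in> Sym (sum_list lam)" and t: "tableau lam t"
  shows "tableau lam (s \<circ> t)"
proof -
  have sp: "s permutes {1..sum_list lam}" using s by (simp add: Sym_def)
  have "bij_betw (s \<circ> t) (cells lam) {1..sum_list lam}"
    using bij_betw_trans[of t "cells lam" "{1..sum_list lam}" s "{1..sum_list lam}"] t
      permutes_imp_bij[OF sp] by (simp add: tableau_def)
  moreover have "\<forall>c. c \<notin> cells lam \<longrightarrow> (s \<circ> t) c = 0"
  proof (intro allI impI)
    fix c assume "c \<notin> cells lam"
    then have "t c = 0" using tableau_out[OF t] by simp
    then show "(s \<circ> t) c = 0" using permutes_not_in[OF sp] by simp
  qed
  ultimately show ?thesis by (simp add: tableau_def)
qed

lemma Sym_inv: "s \<in> Sym N \<Longrightarrow> inv s \<in> Sym N"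
  by (simp add: Sym_def permutes_inv)

lemma Sym_comp: "s \<in> Sym N \<Longrightarrow> r \<in> Sym N \<Longrightarrow> r \<circ> s \<in> Sym N"
  by (simp add: Sym_def permutes_compose)

lemma tau_comp:
  assumes s: "s \<in> Sym (sum_list lam)" and t: "tableau lam t'"
  shows "tau lam (s \<circ> t') = tau lam t' \<circ> inv s"
proof (rule tau_unique[OF tableau_comp[OF s t]])
  show "tau lam (s \<circ> t') \<in> Sym (sum_list lam)" using tau_char[OF tableau_comp[OF s t]] by simp
  show "tau lam t' \<circ> inv s \<in> Sym (sum_list lam)" using tau_char[OF t] Sym_inv[OF s] Sym_comp by blast
  have sp: "s permutes {1..sum_list lam}" using s by (simp add: Sym_def)
  have "tau lam t' \<circ> inv s \<circ> (s \<circ> t') = tau lam t' \<circ> (inv s \<circ> s) \<circ> t'" by (simp add: comp_assoc)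
  also have "\<dots> = tau lam t' \<circ> t'" using permutes_inv_o(2)[OF sp] by simp
  finally show "tau lam (s \<circ> t') \<circ> (s \<circ> t') = tau lam t' \<circ> inv s \<circ> (s \<circ> t')"
    using tau_char[OF tableau_comp[OF s t]] tau_char[OF t] by simp
qed

lemma tabloid_comp:
  assumes s: "s \<in> Sym (sum_list lam)"
  shows "tabloid lam (s \<circ> t) = (\<lambda>t'. s \<circ> t') ` tabloid lam t"
proof
  have sp: "s permutes {1..sum_list lam}" using s by (simp add: Sym_def)
  show "(\<lambda>t'. s \<circ> t') ` tabloid lam t \<subseteq> tabloid lam (s \<circ> t)"
  proof
    fix x assume "x \<in> (\<lambda>t'. s \<circ> t') ` tabloid lam t"
    then obtain t' where t': "t' \<in> tabloid lam t" "x = s \<circ> t'" by blast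
    have "tableau lam t'" "\<forall>i. t' ` row lam i = t ` row lam i" using t'(1) by (auto simp: tabloid_def)
    then have "\<forall>i. (s \<circ> t') ` row lam i = (s \<circ> t) ` row lam i" by (metis image_comp)
    moreover have "tableau lam (s \<circ> t')" using tableau_comp[OF s] \<open>tableau lam t'\<close> by blast
    ultimately show "x \<in> tabloid lam (s \<circ> t)" using t'(2) unfolding tabloid_def by blast
  qed
  show "tabloid lam (s \<circ> t) \<subseteq> (\<lambda>t'. s \<circ> t') ` tabloid lam t"
  proof
    fix x assume x: "x \<in> tabloid lam (s \<circ> t)"
    have xt: "tableau lam x" and xr: "\<forall>i. x ` row lam i = (s \<circ> t) ` row lam i" using x by (auto simp: tabloid_def)
    have ii: "inv s \<circ> s = id" "s \<circ> inv s = id" using permutes_inv_o[OF sp] by auto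
    have "tableau lam (inv s \<circ> x)" using tableau_comp[OF Sym_inv[OF s] xt] .
    moreover have "\<forall>i. (inv s \<circ> x) ` row lam i = t ` row lam i"
    proof
      fix i
      have "(inv s \<circ> x) ` row lam i = inv s ` ((s \<circ> t) ` row lam i)" using xr by (metis image_comp)
      also have "\<dots> = (inv s \<circ> s \<circ> t) ` row lam i" by (simp add: image_comp comp_assoc)
      also have "\<dots> = t ` row lam i" using ii by simp
      finally show "(inv s \<circ> x) ` row lam i = t ` row lam i" .
    qed
    ultimately have "inv s \<circ> x \<in> tabloid lam t" by (simp add: tabloid_def)
    moreover have "x = s \<circ> (inv s \<circ> x)" using ii by (simp add: comp_assoc[symmetric])
    ultimately show "x \<in> (\<lambda>t'. s \<circ> t') ` tabloid lam t" by blast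
  qed
qed

lemma comp_inj:
  assumes s: "s \<in> Sym N"
  shows "inj_on (\<lambda>t'. s \<circ> (t'::'a \<Rightarrow> nat)) A"
proof (rule inj_onI)
  fix a b assume "s \<circ> a = s \<circ> b"
  moreover have "inj s" using s by (simp add: Sym_def permutes_inj)
  ultimately show "a = b" by (simp add: fun.inj_map_strong inj_eq fun_eq_iff)
qed

lemma finite_tableaux:
  assumes t: "tableau lam t"
  shows "finite {t'. tableau lam t'}"
proof -
  have "{t'. tableau lam t'} \<subseteq> {f. \<forall>x. (x \<in> cells lam \<longrightarrow> f x \<in> {1..sum_list lam}) \<and> (x \<notin> cells lam \<longrightarrow> f x = 0)}"
  proof (rule subsetI, unfold mem_Collect_eq, intro allI conjI impI)
    fix f x assume f: "tableau lam f"
    show "x \<in> cells lam \<Longrightarrow> f x \<in> {1..sum_list lam}"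
      using f unfolding tableau_def by (meson bij_betwE)
    show "x \<notin> cells lam \<Longrightarrow> f x = 0" using tableau_out[OF f] .
  qed
  moreover have "finite {f. \<forall>x. (x \<in> cells lam \<longrightarrow> f x \<in> {1..sum_list lam}) \<and> (x \<notin> cells lam \<longrightarrow> f x = (0::nat))}"
    by (rule finite_set_of_finite_funs) (use cells_finite[OF t] in auto)
  ultimately show ?thesis by (rule finite_subset)
qed

lemma finite_tabloids:
  assumes t: "tableau lam t"
  shows "finite (tabloids lam)"
proof -
  have "tabloids lam \<subseteq> Pow {t'. tableau lam t'}" by (auto simp: tabloids_def tabloid_def)
  then show ?thesis using finite_tableaux[OF t] by (meson finite_Pow_iff finite_subset)
qed

lemma finite_tabloid: "tableau lam t \<Longrightarrow> finite (tabloid lam t')"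
  using finite_tableaux by (rule finite_subset[rotated]) (auto simp: tabloid_def)

lemma tabloid_in: "tableau lam t \<Longrightarrow> tabloid lam t \<in> tabloids lam"
  by (auto simp: tabloids_def)

lemma finite_Sym: "finite (Sym N)"
  unfolding Sym_def by (rule finite_permutations) simp

lemma phi_basis:
  assumes t: "tableau lam t"
  shows "phi lam (basisM (tabloid lam t)) q = (\<Sum>t'\<in>tabloid lam t. delta (tau lam t') q)"
proof -
  have "phi lam (basisM (tabloid lam t)) q =
     (\<Sum>T\<in>tabloids lam. if T = tabloid lam t then (\<Sum>t'\<in>T. delta (tau lam t') q) else 0)"
    unfolding phi_def basisM_def by (rule sum.cong) auto
  also have "\<dots> = (\<Sum>t'\<in>tabloid lam t. delta (tau lam t') q)"
    using finite_tabloids[OF t] tabloid_in[OF t] by (simp add: sum.delta')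
  finally show ?thesis .
qed


lemma lhs_eq:
  assumes t: "tableau lam t"
  shows "phi lam (polytabloid lam t) q =
    (\<Sum>s\<in>colstab lam t. of_int (sign s) * (\<Sum>t'\<in>tabloid lam t. delta (tau lam t' \<circ> inv s) q))"
proof -
  let ?X = "\<lambda>T. (\<Sum>t'\<in>T. delta (tau lam t') q)"
  have fC: "finite (colstab lam t)"
    using finite_Sym[of "sum_list lam"] by (rule finite_subset[rotated]) (auto simp: colstab_def)
  have CS: "\<And>s. s \<in> colstab lam t \<Longrightarrow> s \<in> Sym (sum_list lam)" by (simp add: colstab_def)
  have "phi lam (polytabloid lam t) q =
     (\<Sum>T\<in>tabloids lam. \<Sum>s\<in>colstab lam t. of_int (sign s) * basisM (tabloid lam (s \<circ> t)) T * ?X T)"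
    unfolding phi_def polytabloid_def by (simp add: sum_distrib_right)
  also have "\<dots> = (\<Sum>s\<in>colstab lam t. \<Sum>T\<in>tabloids lam. of_int (sign s) * basisM (tabloid lam (s \<circ> t)) T * ?X T)"
    by (rule sum.swap)
  also have "\<dots> = (\<Sum>s\<in>colstab lam t. of_int (sign s) * ?X (tabloid lam (s \<circ> t)))"
  proof (rule sum.cong[OF refl])
    fix s assume s: "s \<in> colstab lam t"
    have "tabloid lam (s \<circ> t) \<in> tabloids lam"
      using tabloid_in[OF tableau_comp[OF CS[OF s] t]] .
    then show "(\<Sum>T\<in>tabloids lam. of_int (sign s) * basisM (tabloid lam (s \<circ> t)) T * ?X T) =
        of_int (sign s) * ?X (tabloid lam (s \<circ> t))"
    proof -
      have "(\<Sum>T\<in>tabloids lam. of_int (sign s) * basisM (tabloid lam (s \<circ> t)) T * ?X T) =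
        (\<Sum>T\<in>tabloids lam. if T = tabloid lam (s \<circ> t) then of_int (sign s) * ?X T else 0)"
        by (rule sum.cong[OF refl]) (auto simp: basisM_def)
      also have "\<dots> = of_int (sign s) * ?X (tabloid lam (s \<circ> t))"
        using \<open>tabloid lam (s \<circ> t) \<in> tabloids lam\<close> by (subst sum.delta[OF finite_tabloids[OF t]]) simp
      finally show ?thesis .
    qed
  qed
  also have "\<dots> = (\<Sum>s\<in>colstab lam t. of_int (sign s) * (\<Sum>t'\<in>tabloid lam t. delta (tau lam t' \<circ> inv s) q))"
  proof (rule sum.cong[OF refl])
    fix s assume s: "s \<in> colstab lam t"
    have "?X (tabloid lam (s \<circ> t)) = (\<Sum>t'\<in>tabloid lam t. delta (tau lam (s \<circ> t')) q)"
      unfolding tabloid_comp[OF CS[OF s]]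
      by (subst sum.reindex[OF comp_inj[OF CS[OF s]]]) simp
    also have "\<dots> = (\<Sum>t'\<in>tabloid lam t. delta (tau lam t' \<circ> inv s) q)"
      by (rule sum.cong[OF refl]) (simp add: tau_comp[OF CS[OF s]] tabloid_def)
    finally show "of_int (sign s) * ?X (tabloid lam (s \<circ> t)) =
       of_int (sign s) * (\<Sum>t'\<in>tabloid lam t. delta (tau lam t' \<circ> inv s) q)" by simp
  qed
  finally show ?thesis .
qed

lemma rhs_eq:
  assumes t: "tableau lam t"
  shows "lmult (sum_list lam) (inv p) (phi lam (basisM (tabloid lam t))) q =
    (\<Sum>t'\<in>tabloid lam t. delta (tau lam t' \<circ> inv p) q)"
proof -
  let ?N = "sum_list lam"
  have "lmult ?N (inv p) (phi lam (basisM (tabloid lam t))) q =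
     (\<Sum>r\<in>Sym ?N. \<Sum>t'\<in>tabloid lam t. delta (tau lam t') r * delta (r \<circ> inv p) q)"
    unfolding lmult_def phi_basis[OF t] by (simp add: sum_distrib_right)
  also have "\<dots> = (\<Sum>t'\<in>tabloid lam t. \<Sum>r\<in>Sym ?N. delta (tau lam t') r * delta (r \<circ> inv p) q)"
    by (rule sum.swap)
  also have "\<dots> = (\<Sum>t'\<in>tabloid lam t. delta (tau lam t' \<circ> inv p) q)"
  proof (rule sum.cong[OF refl])
    fix t' assume "t' \<in> tabloid lam t"
    then have "tau lam t' \<in> Sym ?N" using tau_char by (simp add: tabloid_def)
    then show "(\<Sum>r\<in>Sym ?N. delta (tau lam t') r * delta (r \<circ> inv p) q) = delta (tau lam t' \<circ> inv p) q"
    proof -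
      have "(\<Sum>r\<in>Sym ?N. delta (tau lam t') r * delta (r \<circ> inv p) q) =
          (\<Sum>r\<in>Sym ?N. if tau lam t' = r then delta (r \<circ> inv p) q else 0)"
        by (rule sum.cong[OF refl]) (auto simp: delta_def)
      also have "\<dots> = delta (tau lam t' \<circ> inv p) q"
        using \<open>tau lam t' \<in> Sym ?N\<close> by (subst sum.delta'[OF finite_Sym]) simp
      finally show ?thesis .
    qed
  qed
  finally show ?thesis .
qed

theorem lemma5:
  fixes n :: nat and lam :: "nat list" and t :: "nat \<times> nat \<Rightarrow> nat"
  assumes "is_partition n lam"
    and "tableau lam t"
  shows "phi lam (polytabloid lam t) =
    (\<lambda>q. \<Sum>p\<in>colstab lam t. of_int (sign p) * lmult n (inv p) (phi lam (basisM (tabloid lam t))) q)"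
proof
  fix q
  have n: "n = sum_list lam" using assms(1) by (simp add: is_partition_def)
  show "phi lam (polytabloid lam t) q =
    (\<Sum>p\<in>colstab lam t. of_int (sign p) * lmult n (inv p) (phi lam (basisM (tabloid lam t))) q)"
    unfolding n lhs_eq[OF assms(2)] rhs_eq[OF assms(2)] ..
qed

end
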